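(* Let $X,Z$ be complex Banach spaces, $E\in L(X,Z)$, $A\colon\mathrm{dom}(A)\subseteq X\to Z$ closed and densely defined, and assume $(E,A)$ has a complex resolvent index $p_{\mathrm{res}}^{(E,A)}$; set $p:=p_{\mathrm{res}}^{(E,A)}+1$. Fix $\mu\in\rho(E,A)$, let $X_{\ker}:=\ker R_r(\mu)^p$, $Z_{\ker}:=\ker R_l(\mu)^p$, let $A_{\ker}:=A|_{\mathrm{dom}(A)\cap X_{\ker}}\colon \mathrm{dom}(A)\cap X_{\ker}\to Z_{\ker}$ (which has a bounded inverse $A_{\ker}^{-1}\colon Z_{\ker}\to X_{\ker}$) and $E_{\ker}:=E|_{X_{\ker}}\in L(X_{\ker},Z_{\ker})$. Let $f\in C^p([0,\infty);Z_{\ker})$. Then the equation $\frac{\mathrm d}{\mathrm dt}Ex(t)=Ax(t)+f(t)$, $t\in[0,\infty)$, has a classical solution given by $$x(t)=-\sum_{i=0}^pA_{\ker}^{-1}(E_{\ker}A_{\ker}^{-1})^if^{(i)}(t),\quad t\ge0.$$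
   Context: $\rho(E,A)$ is the set of $\lambda\in\mathbb C$ for which $\lambda E-A\colon\mathrm{dom}(A)\to Z$ is bijective with bounded inverse. $(E,A)$ has a complex resolvent index if there is a smallest $p_{\mathrm{res}}^{(E,A)}\in\mathbb N_0$ for which there exist $\omega\in\mathbb R$, $C>0$ with $\{\operatorname{Re}\lambda>\omega\}\subseteq\rho(E,A)$ and $\|(\lambda E-A)^{-1}\|\le C|\lambda|^{p_{\mathrm{res}}^{(E,A)}-1}$ for $\operatorname{Re}\lambda>\omega$. $R_r(\lambda):=(\lambda E-A)^{-1}E$, $R_l(\lambda):=E(\lambda E-A)^{-1}$. A classical solution of $\frac{\mathrm d}{\mathrm dt}Ex=Ax+f$ on $[0,\infty)$ is a function $x\in C([0,\infty);X)$ with $Ex\in C^1([0,\infty);Z)$, $x(t)\in\mathrm{dom}(A)$ for all $t\ge0$, satisfying the equation for all $t\ge0$. *)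

theory Defs
  imports "HOL-Analysis.Analysis"
begin

class complex_vector = real_vector +
  fixes scaleC :: "complex \<Rightarrow> 'a \<Rightarrow> 'a" (infixr "*\<^sub>C" 75)
  assumes scaleC_add_right: "a *\<^sub>C (x + y) = a *\<^sub>C x + a *\<^sub>C y"
    and scaleC_add_left: "(a + b) *\<^sub>C x = a *\<^sub>C x + b *\<^sub>C x"
    and scaleC_scaleC: "a *\<^sub>C (b *\<^sub>C x) = (a * b) *\<^sub>C x"
    and scaleC_one: "1 *\<^sub>C x = x"
    and scaleR_scaleC: "scaleR r x = (complex_of_real r) *\<^sub>C x"

class complex_normed_vector = complex_vector + real_normed_vector +
  assumes norm_scaleC: "norm (a *\<^sub>C x) = cmod a * norm x"

class complex_banach = complex_normed_vector + banach

definition cbounded_linear :: "('a::complex_normed_vector \<Rightarrow> 'b::complex_normed_vector) \<Rightarrow> bool" where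
  "cbounded_linear T \<longleftrightarrow> bounded_linear T \<and> (\<forall>c x. T (c *\<^sub>C x) = c *\<^sub>C T x)"

definition csubspace :: "'a::complex_vector set \<Rightarrow> bool" where
  "csubspace D \<longleftrightarrow> 0 \<in> D \<and> (\<forall>x\<in>D. \<forall>y\<in>D. x + y \<in> D) \<and> (\<forall>c. \<forall>x\<in>D. c *\<^sub>C x \<in> D)"

text \<open>A linear operator A with domain D (only the values on D matter).\<close>
definition clinear_on :: "'a::complex_vector set \<Rightarrow> ('a \<Rightarrow> 'b::complex_vector) \<Rightarrow> bool" where
  "clinear_on D A \<longleftrightarrow> csubspace D \<and> (\<forall>x\<in>D. \<forall>y\<in>D. A (x + y) = A x + A y)
      \<and> (\<forall>c. \<forall>x\<in>D. A (c *\<^sub>C x) = c *\<^sub>C A x)"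

definition closed_operator :: "'a::complex_normed_vector set \<Rightarrow> ('a \<Rightarrow> 'b::complex_normed_vector) \<Rightarrow> bool" where
  "closed_operator D A \<longleftrightarrow> clinear_on D A \<and> closed {(x, A x) | x. x \<in> D}"

definition densely_defined :: "'a::complex_normed_vector set \<Rightarrow> bool" where
  "densely_defined D \<longleftrightarrow> closure D = UNIV"

definition pencil :: "('x::complex_normed_vector \<Rightarrow> 'z::complex_normed_vector) \<Rightarrow> ('x \<Rightarrow> 'z) \<Rightarrow> complex \<Rightarrow> 'x \<Rightarrow> 'z" where
  "pencil E A l = (\<lambda>x. l *\<^sub>C E x - A x)"

definition resolvent :: "('x::complex_normed_vector \<Rightarrow> 'z::complex_normed_vector) \<Rightarrow> ('x \<Rightarrow> 'z) \<Rightarrow> 'x set \<Rightarrow> complex \<Rightarrow> 'z \<Rightarrow> 'x" where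
  "resolvent E A D l = the_inv_into D (pencil E A l)"

definition resolvent_set :: "('x::complex_normed_vector \<Rightarrow> 'z::complex_normed_vector) \<Rightarrow> ('x \<Rightarrow> 'z) \<Rightarrow> 'x set \<Rightarrow> complex set" where
  "resolvent_set E A D = {l. bij_betw (pencil E A l) D UNIV \<and> bounded_linear (resolvent E A D l)}"

text \<open>Resolvent growth bound with exponent p - 1 (p :: nat); for p = 0 and \<lambda> = 0 the
  bound |\<lambda>|^{-1} is +\<infinity>, i.e. no constraint.\<close>
definition resolvent_bound :: "('x::complex_normed_vector \<Rightarrow> 'z::complex_normed_vector) \<Rightarrow> ('x \<Rightarrow> 'z) \<Rightarrow> 'x set \<Rightarrow> nat \<Rightarrow> bool" where
  "resolvent_bound E A D p \<longleftrightarrow> (\<exists>\<omega>::real. \<exists>C::real. C > 0 \<and> {l. Re l > \<omega>} \<subseteq> resolvent_set E A D \<and>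
     (\<forall>l. Re l > \<omega> \<longrightarrow> (p = 0 \<and> l = 0) \<or>
          onorm (resolvent E A D l) \<le> C * cmod l powi (int p - 1)))"

definition has_resolvent_index :: "('x::complex_normed_vector \<Rightarrow> 'z::complex_normed_vector) \<Rightarrow> ('x \<Rightarrow> 'z) \<Rightarrow> 'x set \<Rightarrow> bool" where
  "has_resolvent_index E A D \<longleftrightarrow> (\<exists>p. resolvent_bound E A D p)"

definition resolvent_index :: "('x::complex_normed_vector \<Rightarrow> 'z::complex_normed_vector) \<Rightarrow> ('x \<Rightarrow> 'z) \<Rightarrow> 'x set \<Rightarrow> nat" where
  "resolvent_index E A D = (LEAST p. resolvent_bound E A D p)"

definition R_r :: "('x::complex_normed_vector \<Rightarrow> 'z::complex_normed_vector) \<Rightarrow> ('x \<Rightarrow> 'z) \<Rightarrow> 'x set \<Rightarrow> complex \<Rightarrow> 'x \<Rightarrow> 'x" where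
  "R_r E A D l = resolvent E A D l \<circ> E"

definition R_l :: "('x::complex_normed_vector \<Rightarrow> 'z::complex_normed_vector) \<Rightarrow> ('x \<Rightarrow> 'z) \<Rightarrow> 'x set \<Rightarrow> complex \<Rightarrow> 'z \<Rightarrow> 'z" where
  "R_l E A D l = E \<circ> resolvent E A D l"

definition classical_solution :: "('x::complex_normed_vector \<Rightarrow> 'z::complex_normed_vector) \<Rightarrow> ('x \<Rightarrow> 'z) \<Rightarrow> 'x set \<Rightarrow> (real \<Rightarrow> 'z) \<Rightarrow> (real \<Rightarrow> 'x) \<Rightarrow> bool" where
  "classical_solution E A D f x \<longleftrightarrow>
     continuous_on {0..} x \<and>
     (\<exists>g. continuous_on {0..} g \<and>
          (\<forall>t\<ge>0. ((\<lambda>s. E (x s)) has_vector_derivative g t) (at t within {0..})) \<and>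
          (\<forall>t\<ge>0. x t \<in> D \<and> g t = A (x t) + f t))"

end

theory Submission
  imports Defs
begin

lemma bl_scaleC: "bounded_linear (\<lambda>x::'a::complex_normed_vector. c *\<^sub>C x)"
proof (rule bounded_linear_intro[where K="cmod c"])
  fix x y :: 'a show "c *\<^sub>C (x + y) = c *\<^sub>C x + c *\<^sub>C y" by (rule scaleC_add_right)
next
  fix r and x :: 'a
  show "c *\<^sub>C (r *\<^sub>R x) = r *\<^sub>R (c *\<^sub>C x)"
    by (simp add: scaleR_scaleC scaleC_scaleC mult.commute)
next
  fix x :: 'a show "norm (c *\<^sub>C x) \<le> norm x * cmod c" by (simp add: norm_scaleC)
qed

lemma scaleC_minus_one: "(-1) *\<^sub>C (x::'a::complex_vector) = - x"
  by (metis of_real_1 of_real_minus scaleR_minus1_left scaleR_scaleC)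

lemma scaleC_zero_left: "0 *\<^sub>C (x::'a::complex_vector) = 0"
  by (metis of_real_0 scaleR_zero_left scaleR_scaleC)

lemma scaleC_zero_right [simp]: "c *\<^sub>C (0::'a::complex_normed_vector) = 0"
  using linear_0[OF bounded_linear.linear[OF bl_scaleC]] .

declare scaleC_zero_left [simp]

definition chom :: "('a::complex_vector \<Rightarrow> 'b::complex_vector) \<Rightarrow> bool" where
  "chom L \<longleftrightarrow> (\<forall>c x. L (c *\<^sub>C x) = c *\<^sub>C L x)"

lemma chom_funpow: "chom (L::'a::complex_vector\<Rightarrow>'a) \<Longrightarrow> chom (L ^^ n)"
  by (induction n) (auto simp: chom_def)

lemma bl_funpow: "bounded_linear (L::'a::real_normed_vector\<Rightarrow>'a) \<Longrightarrow> bounded_linear (L ^^ n)"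
proof (induction n)
  case 0 then show ?case by (simp add: bounded_linear_ident id_def)
next
  case (Suc n)
  then show ?case using bounded_linear_compose[of L "L ^^ n"] by (simp add: o_def)
qed

lemma clin_basic:
  assumes "clinear_on D A"
  shows "0 \<in> D" "A 0 = 0"
    "x \<in> D \<Longrightarrow> y \<in> D \<Longrightarrow> x + y \<in> D \<and> A (x + y) = A x + A y"
    "x \<in> D \<Longrightarrow> c *\<^sub>C x \<in> D \<and> A (c *\<^sub>C x) = c *\<^sub>C A x"
    "x \<in> D \<Longrightarrow> - x \<in> D \<and> A (- x) = - A x"
proof -
  show "0 \<in> D" using assms by (auto simp: clinear_on_def csubspace_def)
  then have "A (0 + 0) = A 0 + A 0" using assms unfolding clinear_on_def by blast
  then show "A 0 = 0" by simp
  show "x \<in> D \<Longrightarrow> y \<in> D \<Longrightarrow> x + y \<in> D \<and> A (x + y) = A x + A y"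
    using assms by (auto simp: clinear_on_def csubspace_def)
  show "x \<in> D \<Longrightarrow> c *\<^sub>C x \<in> D \<and> A (c *\<^sub>C x) = c *\<^sub>C A x" for c
    using assms by (auto simp: clinear_on_def csubspace_def)
  from this[of "-1"] show "x \<in> D \<Longrightarrow> - x \<in> D \<and> A (- x) = - A x"
    by (simp add: scaleC_minus_one)
qed

lemma clin_sum:
  assumes "clinear_on D A" "finite I" "\<forall>i\<in>I. v i \<in> D"
  shows "sum v I \<in> D \<and> A (sum v I) = (\<Sum>i\<in>I. A (v i))"
  using assms(2,3)
proof (induction I rule: finite_induct)
  case empty then show ?case using clin_basic[OF assms(1)] by simp
next
  case (insert i I)
  then show ?case using clin_basic(3)[OF assms(1), of "v i" "sum v I"] by simp
qed


theorem proposition3p3: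
  fixes E :: "'x::complex_banach \<Rightarrow> 'z::complex_banach"
    and A :: "'x \<Rightarrow> 'z" and D :: "'x set"
    and \<mu> :: complex and p :: nat
    and f :: "nat \<Rightarrow> real \<Rightarrow> 'z"
  assumes E: "cbounded_linear E"
    and A: "closed_operator D A" and dense: "densely_defined D"
    and idx: "has_resolvent_index E A D"
    and p_def: "p = resolvent_index E A D + 1"
    and mu: "\<mu> \<in> resolvent_set E A D"
    and f_ker: "\<forall>t\<ge>0. f 0 t \<in> {z. (R_l E A D \<mu> ^^ p) z = 0}"
    and f_deriv: "\<forall>i<p. \<forall>t\<ge>0. (f i has_vector_derivative f (Suc i) t) (at t within {0..})"
    and f_cont: "\<forall>i\<le>p. continuous_on {0..} (f i)"
  shows "classical_solution E A D (f 0)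
           (\<lambda>t. - (\<Sum>i\<le>p. the_inv_into (D \<inter> {x. (R_r E A D \<mu> ^^ p) x = 0}) A
                    (((E \<circ> the_inv_into (D \<inter> {x. (R_r E A D \<mu> ^^ p) x = 0}) A) ^^ i) (f i t))))"
proof -
  define P where "P = pencil E A \<mu>"
  define R where "R = resolvent E A D \<mu>"
  have bij: "bij_betw P D UNIV" and blR: "bounded_linear R"
    using mu by (auto simp: resolvent_set_def P_def R_def)
  have injP: "inj_on P D" using bij by (simp add: bij_betw_def)
  have imP: "P ` D = UNIV" using bij by (simp add: bij_betw_def)
  have RP_inv: "R = the_inv_into D P" by (simp add: R_def P_def resolvent_def)
  have Rin: "R z \<in> D" for z
    unfolding RP_inv by (rule the_inv_into_into[OF injP]) (auto simp: imP)
  have PR: "P (R z) = z" for z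
    unfolding RP_inv by (rule f_the_inv_into_f[OF injP]) (auto simp: imP)
  have RP: "x \<in> D \<Longrightarrow> R (P x) = x" for x
    unfolding RP_inv by (rule the_inv_into_f_f[OF injP])
  have Pdef: "P x = \<mu> *\<^sub>C E x - A x" for x by (simp add: P_def pencil_def)
  have blE: "bounded_linear E" and homE: "chom E"
    using E by (auto simp: cbounded_linear_def chom_def)
  have Alin: "clinear_on D A" using A by (simp add: closed_operator_def)
  have homR: "chom R"
    unfolding chom_def
  proof (intro allI)
    fix c z
    have inD: "c *\<^sub>C R z \<in> D" and Ac: "A (c *\<^sub>C R z) = c *\<^sub>C A (R z)"
      using clin_basic(4)[OF Alin Rin] by auto
    have "P (c *\<^sub>C R z) = \<mu> *\<^sub>C (c *\<^sub>C E (R z)) - c *\<^sub>C A (R z)"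
      using Ac homE by (simp add: Pdef chom_def)
    also have "\<dots> = c *\<^sub>C (\<mu> *\<^sub>C E (R z)) - c *\<^sub>C A (R z)"
      by (simp add: scaleC_scaleC mult.commute)
    also have "\<dots> = c *\<^sub>C (\<mu> *\<^sub>C E (R z) - A (R z))"
      by (rule linear_diff[OF bounded_linear.linear[OF bl_scaleC], symmetric])
    also have "\<dots> = c *\<^sub>C z" using PR[of z] by (simp add: Pdef)
    finally have "P (c *\<^sub>C R z) = c *\<^sub>C z" .
    then show "R (c *\<^sub>C z) = c *\<^sub>C R z" using RP[OF inD] by metis
  qed
  define T where "T = (\<lambda>z. E (R z))"
  have blT: "bounded_linear T" unfolding T_def using bounded_linear_compose[OF blE blR] .
  have homT: "chom T" using homE homR by (simp add: chom_def T_def)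
  have Rl: "R_l E A D \<mu> = T" by (simp add: R_l_def R_def T_def o_def fun_eq_iff)
  define S where "S = (\<lambda>x. R (E x))"
  have blS: "bounded_linear S" unfolding S_def using bounded_linear_compose[OF blR blE] .
  have homS: "chom S" using homE homR by (simp add: chom_def S_def)
  have Rr: "R_r E A D \<mu> = S" by (simp add: R_r_def R_def S_def o_def fun_eq_iff)
  have blTn: "bounded_linear (T ^^ n)" for n using bl_funpow[OF blT] .
  have homTn: "chom (T ^^ n)" for n using chom_funpow[OF homT] .
  have blSn: "bounded_linear (S ^^ n)" for n using bl_funpow[OF blS] .
  have homSn: "chom (S ^^ n)" for n using chom_funpow[OF homS] .
  have Tswap: "(T ^^ m) ((T ^^ k) z) = (T ^^ k) ((T ^^ m) z)" for m k z
  proof -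
    have "(T ^^ m) ((T ^^ k) z) = (T ^^ (m + k)) z" by (simp add: funpow_add)
    also have "\<dots> = (T ^^ (k + m)) z" by (simp add: add.commute)
    finally show ?thesis by (simp add: funpow_add)
  qed
  define K where "K = (\<lambda>z. - (\<Sum>k<p. (\<mu> ^ k) *\<^sub>C R ((T ^^ k) z)))"
  define M where "M = (\<lambda>z. E (K z))"
  have blK: "bounded_linear K"
    unfolding K_def
    by (intro bounded_linear_minus bounded_linear_sum bounded_linear_compose[OF bl_scaleC]
        bounded_linear_compose[OF blR] blTn)
  have blM: "bounded_linear M" unfolding M_def using bounded_linear_compose[OF blE blK] .
  have Mform: "M z = - (\<Sum>k<p. (\<mu> ^ k) *\<^sub>C (T ^^ Suc k) z)" for z
    using homE by (simp add: M_def K_def linear_neg[OF bounded_linear.linear[OF blE]]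
        linear_sum[OF bounded_linear.linear[OF blE]] chom_def T_def)
  have kerstep: "(T ^^ m) (M z) = 0" if "(T ^^ Suc m) z = 0" for m z
  proof -
    have "(T ^^ m) (M z) = - (\<Sum>k<p. (\<mu> ^ k) *\<^sub>C (T ^^ m) ((T ^^ Suc k) z))"
      using homTn[of m] by (simp add: Mform linear_neg[OF bounded_linear.linear[OF blTn]]
        linear_sum[OF bounded_linear.linear[OF blTn]] chom_def)
    also have "\<dots> = 0"
    proof -
      have "(T ^^ m) ((T ^^ Suc k) z) = 0" for k
        using Tswap[of m "Suc k" z] Tswap[of "Suc m" k z] that
        by (simp add: funpow_swap1 linear_0[OF bounded_linear.linear[OF blTn]])
      then show ?thesis by simp
    qed
    finally show ?thesis .
  qed
  have nil: "(M ^^ p) z = 0" if "(T ^^ p) z = 0" for z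
  proof -
    have "\<forall>j\<le>p. (T ^^ (p - j)) ((M ^^ j) z) = 0"
    proof (intro allI impI)
      fix j assume "j \<le> p"
      then show "(T ^^ (p - j)) ((M ^^ j) z) = 0"
      proof (induction j)
        case 0 then show ?case using that by simp
      next
        case (Suc j)
        then have "(T ^^ Suc (p - Suc j)) ((M ^^ j) z) = 0"
          by (simp add: Suc_diff_Suc)
        from kerstep[OF this] show ?case by simp
      qed
    qed
    then show ?thesis by auto
  qed
  have Mker: "(T ^^ p) (M z) = 0" if "(T ^^ p) z = 0" for z
    using kerstep[of p z] that linear_0[OF bounded_linear.linear[OF blT]] by simp
  have Mpow_ker: "(T ^^ p) ((M ^^ i) z) = 0" if "(T ^^ p) z = 0" for i z
    using that by (induction i) (auto intro: Mker)
  have SR: "(S ^^ n) (R w) = R ((T ^^ n) w)" for n w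
    by (induction n) (simp_all add: S_def T_def)
  have AR: "A (R w) = \<mu> *\<^sub>C T w - w" for w
  proof -
    have h: "\<mu> *\<^sub>C E (R w) - A (R w) = w" using PR[of w] by (simp add: Pdef)
    show ?thesis unfolding T_def by (subst (2) h[symmetric]) simp
  qed
  have Kprop: "K z \<in> D \<and> A (K z) = z \<and> (S ^^ p) (K z) = 0" if zk: "(T ^^ p) z = 0" for z
  proof -
    have terms: "\<forall>k\<in>{..<p}. (\<mu> ^ k) *\<^sub>C R ((T ^^ k) z) \<in> D"
      using clin_basic(4)[OF Alin Rin] by auto
    note sm = clin_sum[OF Alin finite_lessThan terms]
    have inD: "K z \<in> D" using clin_basic(5)[OF Alin] sm by (simp add: K_def)
    have "A (K z) = - (\<Sum>k<p. A ((\<mu> ^ k) *\<^sub>C R ((T ^^ k) z)))"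
      using clin_basic(5)[OF Alin] sm by (simp add: K_def)
    also have "\<dots> = - (\<Sum>k<p. (\<mu> ^ Suc k) *\<^sub>C (T ^^ Suc k) z - (\<mu> ^ k) *\<^sub>C (T ^^ k) z)"
    proof -
      have "A ((\<mu> ^ k) *\<^sub>C R ((T ^^ k) z)) = (\<mu> ^ Suc k) *\<^sub>C (T ^^ Suc k) z - (\<mu> ^ k) *\<^sub>C (T ^^ k) z" for k
      proof -
        have "A ((\<mu> ^ k) *\<^sub>C R ((T ^^ k) z)) = (\<mu> ^ k) *\<^sub>C (\<mu> *\<^sub>C T ((T ^^ k) z) - (T ^^ k) z)"
          using clin_basic(4)[OF Alin Rin] AR by simp
        also have "\<dots> = (\<mu> ^ k) *\<^sub>C (\<mu> *\<^sub>C T ((T ^^ k) z)) - (\<mu> ^ k) *\<^sub>C (T ^^ k) z"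
          by (rule linear_diff[OF bounded_linear.linear[OF bl_scaleC]])
        finally show ?thesis by (simp add: scaleC_scaleC mult.commute)
      qed
      then show ?thesis by simp
    qed
    also have "\<dots> = z"
      using sum_lessThan_telescope[of "\<lambda>k. (\<mu> ^ k) *\<^sub>C (T ^^ k) z" p] zk
      by (simp add: scaleC_one)
    finally have AK: "A (K z) = z" .
    have "(S ^^ p) (K z) = - (\<Sum>k<p. (\<mu> ^ k) *\<^sub>C (S ^^ p) (R ((T ^^ k) z)))"
      using homSn[of p] by (simp add: K_def linear_neg[OF bounded_linear.linear[OF blSn]]
        linear_sum[OF bounded_linear.linear[OF blSn]] chom_def)
    also have "\<dots> = 0"
      using Tswap[of p _ z] zk by (simp add: SR linear_0[OF bounded_linear.linear[OF blTn]]
          linear_0[OF bounded_linear.linear[OF blR]])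
    finally show ?thesis using inD AK by simp
  qed
  define Dk where "Dk = D \<inter> {x. (S ^^ p) x = 0}"
  have injA: "inj_on A Dk"
  proof (rule inj_onI)
    fix x y assume x: "x \<in> Dk" and y: "y \<in> Dk" and eq: "A x = A y"
    define w where "w = x + - y"
    have xD: "x \<in> D" and yD: "y \<in> D" using x y by (auto simp: Dk_def)
    have ny: "- y \<in> D" "A (- y) = - A y" using clin_basic(5)[OF Alin yD] by auto
    have sxy: "x + - y \<in> D" "A (x + - y) = A x + A (- y)"
      using clin_basic(3)[OF Alin xD ny(1)] by auto
    have wD: "w \<in> D" unfolding w_def by (rule sxy(1))
    have Aw: "A w = 0" unfolding w_def sxy(2) ny(2) eq by simp
    have Sw: "(S ^^ p) w = 0"
      using x y by (simp add: Dk_def w_def linear_diff[OF bounded_linear.linear[OF blSn]])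
    have "P w = \<mu> *\<^sub>C E w" using Aw by (simp add: Pdef)
    then have w1: "w = \<mu> *\<^sub>C S w" using RP[OF wD] homR by (simp add: S_def chom_def)
    have "w = (\<mu> ^ j) *\<^sub>C (S ^^ j) w" for j
    proof (induction j)
      case 0 then show ?case by (simp add: scaleC_one)
    next
      case (Suc j)
      have "(S ^^ j) w = (S ^^ j) (\<mu> *\<^sub>C S w)" using w1 by simp
      also have "\<dots> = \<mu> *\<^sub>C (S ^^ Suc j) w" using homSn[of j] by (simp add: chom_def funpow_swap1)
      finally have e: "(S ^^ j) w = \<mu> *\<^sub>C (S ^^ Suc j) w" .
      have "w = (\<mu> ^ j) *\<^sub>C (S ^^ j) w" by (rule Suc.IH)
      also have "\<dots> = (\<mu> ^ j) *\<^sub>C (\<mu> *\<^sub>C (S ^^ Suc j) w)" by (subst e) (rule refl)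
      also have "\<dots> = (\<mu> ^ Suc j) *\<^sub>C (S ^^ Suc j) w"
        by (simp only: scaleC_scaleC power_Suc mult.commute)
      finally show ?case .
    qed
    from this[of p] Sw have "w = 0" by simp
    then show "x = y" by (simp add: w_def)
  qed
  have Ainv: "the_inv_into Dk A z = K z" if "(T ^^ p) z = 0" for z
    using Kprop[OF that] by (intro the_inv_into_f_eq[OF injA]) (auto simp: Dk_def)
  have Npow: "((E \<circ> the_inv_into Dk A) ^^ i) z = (M ^^ i) z" if "(T ^^ p) z = 0" for i z
  proof (induction i)
    case 0 then show ?case by simp
  next
    case (Suc i)
    have "((E \<circ> the_inv_into Dk A) ^^ Suc i) z = E (the_inv_into Dk A ((M ^^ i) z))"
      by (simp only: funpow.simps(2) comp_apply Suc.IH)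
    also have "\<dots> = M ((M ^^ i) z)" using Ainv[OF Mpow_ker[OF that]] by (simp add: M_def)
    also have "\<dots> = (M ^^ Suc i) z" by simp
    finally show ?case .
  qed
  have nb: "at t within {0..} \<noteq> bot" if "t \<ge> 0" for t :: real
  proof -
    have "t islimpt {0..t+1}" using that by (simp add: islimpt_Icc)
    then have "t islimpt {0..}" by (rule islimpt_subset) auto
    then show ?thesis by (simp add: trivial_limit_within)
  qed
  have fker: "(T ^^ p) (f i t) = 0" if "i \<le> p" "t \<ge> 0" for i t
    using that
  proof (induction i arbitrary: t)
    case 0 then show ?case using f_ker Rl by simp
  next
    case (Suc i)
    have d1: "((\<lambda>s. (T ^^ p) (f i s)) has_vector_derivative (T ^^ p) (f (Suc i) t)) (at t within {0..})"
      using bounded_linear.has_vector_derivative[OF blTn f_deriv[rule_format, of i t]] Suc.prems by simp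
    have d2: "((\<lambda>s. (T ^^ p) (f i s)) has_vector_derivative 0) (at t within {0..})"
      by (rule has_vector_derivative_transform[where f="\<lambda>s. 0"]) (use Suc in auto)
    show ?case using vector_derivative_unique_within[OF nb[OF Suc.prems(2)] d1 d2] .
  qed
  define xs where "xs = (\<lambda>t. - (\<Sum>i\<le>p. K ((M ^^ i) (f i t))))"
  define x where "x = (\<lambda>t. - (\<Sum>i\<le>p. the_inv_into Dk A (((E \<circ> the_inv_into Dk A) ^^ i) (f i t))))"
  have xe: "x t = xs t" if "t \<ge> 0" for t
    unfolding x_def xs_def
    using Npow[OF fker[OF _ that]] Ainv[OF Mpow_ker[OF fker[OF _ that]]]
    by (intro arg_cong[where f=uminus] sum.cong) auto
  have cont_xs: "continuous_on {0..} xs"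
    unfolding xs_def
    by (intro continuous_on_minus continuous_on_sum bounded_linear.continuous_on[OF blK]
        bounded_linear.continuous_on[OF bl_funpow[OF blM]]) (use f_cont in auto)
  have cont_x: "continuous_on {0..} x"
    using cont_xs by (rule continuous_on_cong[THEN iffD1, rotated 2]) (auto simp: xe)
  define g where "g = (\<lambda>t. - (\<Sum>i<p. (M ^^ Suc i) (f (Suc i) t)))"
  have cont_g: "continuous_on {0..} g"
    unfolding g_def
    by (intro continuous_on_minus continuous_on_sum
        bounded_linear.continuous_on[OF bl_funpow[OF blM]]) (use f_cont in auto)
  have Exs: "E (x t) = - (\<Sum>i<p. (M ^^ Suc i) (f i t))" if "t \<ge> 0" for t
  proof -
    have "E (x t) = - (\<Sum>i\<le>p. M ((M ^^ i) (f i t)))"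
      by (simp add: xe[OF that] xs_def M_def linear_neg[OF bounded_linear.linear[OF blE]]
        linear_sum[OF bounded_linear.linear[OF blE]])
    also have "\<dots> = - (\<Sum>i<p. (M ^^ Suc i) (f i t))"
      using nil[OF fker[OF _ that]] linear_0[OF bounded_linear.linear[OF blM]]
      by (simp add: lessThan_Suc_atMost[symmetric])
    finally show ?thesis .
  qed
  have deriv: "((\<lambda>s. E (x s)) has_vector_derivative g t) (at t within {0..})" if "t \<ge> 0" for t
  proof -
    have "((\<lambda>s. - (\<Sum>i<p. (M ^^ Suc i) (f i s))) has_vector_derivative g t) (at t within {0..})"
      unfolding g_def
      by (intro has_vector_derivative_minus has_vector_derivative_sum
          bounded_linear.has_vector_derivative[OF bl_funpow[OF blM]]) (use f_deriv that in auto)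
    then show ?thesis
      by (rule has_vector_derivative_transform[rotated 2]) (use that Exs in auto)
  qed
  have Dx: "x t \<in> D \<and> A (x t) = - (\<Sum>i\<le>p. (M ^^ i) (f i t))" if "t \<ge> 0" for t
  proof -
    have kp: "\<forall>i\<in>{..p}. K ((M ^^ i) (f i t)) \<in> D"
      "\<And>i. i \<in> {..p} \<Longrightarrow> A (K ((M ^^ i) (f i t))) = (M ^^ i) (f i t)"
      using Kprop[OF Mpow_ker[OF fker[OF _ that]]] by auto
    note sm = clin_sum[OF Alin finite_atMost kp(1)]
    show ?thesis
      using clin_basic(5)[OF Alin sm[THEN conjunct1]] sm kp(2)
      by (simp add: xe[OF that] xs_def)
  qed
  have sol: "classical_solution E A D (f 0) x"
    unfolding classical_solution_def
  proof (intro conjI exI[of _ g] allI impI)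
    show "continuous_on {0..} x" by (rule cont_x)
    show "continuous_on {0..} g" by (rule cont_g)
    fix t :: real assume t: "t \<ge> 0"
    show "((\<lambda>s. E (x s)) has_vector_derivative g t) (at t within {0..})" by (rule deriv[OF t])
    show "x t \<in> D" using Dx[OF t] by simp
    show "g t = A (x t) + f 0 t"
      using Dx[OF t] by (simp add: g_def sum.atMost_shift)
  qed
  then show ?thesis by (simp add: x_def Dk_def Rr)
qed

end
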